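(* Let $G=(V,D)$ be a directed graph and $J=J(\psi_G)$. Let $R_{\lambda_{kl}}$ be the row of $J$ for the edge $(k,l)\in D$ and $R_s$ the row for $s$. Perform the row operations $R_s\to R_s-\frac{\lambda_{kl}}{2s}R_{\lambda_{kl}}$ for every $(k,l)\in D$, followed by $R_s\to 2R_s$. Afterwards the entries of $R_s$ are as follows: the entry in column $K_{ii}$ is $2$; the entry in column $K_{ij}$ with $i\neq j$ and $(i,j)\in D$ is $-\lambda_{ij}$; the entry in column $K_{ij}$ with $i\neq j$ and $i,j$ not adjacent is $0$.
   Context: A directed graph $G=(V,D)$ has edge set $D\subseteq V\times V$ of ordered pairs $(i,j)$, $i\neq j$. $\Lambda$ is the $V\times V$ matrix with indeterminate entries $\lambda_{ij}$ for $(i,j)\in D$ and zeros elsewhere, and $s$ is a further indeterminate. Let $\psi_G(\Lambda,s)=s(I-\Lambda)(I-\Lambda)^T=K$. The transposed Jacobian $J=J(\psi_G)$ has rows indexed by $\{\lambda_{kl}:(k,l)\in D\}\cup\{s\}$ and columns indexed by entries $K_{ij}$ of the symmetric matrix $K$ (so $K_{ij}$ and $K_{ji}$ index the same column). Its entries are $\partial K_{ij}/\partial\theta$. *)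

theory Defs
  imports "HOL-Analysis.Analysis"
begin

definition digraph :: "'v set \<Rightarrow> ('v \<times> 'v) set \<Rightarrow> bool" where
  "digraph V D \<longleftrightarrow> finite V \<and> D \<subseteq> V \<times> V \<and> (\<forall>(i,j)\<in>D. i \<noteq> j)"

text \<open>The indeterminates lambda_kl, (k,l) in D, are modelled by an assignment
lam of real values; Lambda has entry lam (i,j) for (i,j) in D and 0 elsewhere.\<close>
definition Lam :: "('v \<times> 'v) set \<Rightarrow> ('v \<times> 'v \<Rightarrow> real) \<Rightarrow> 'v \<Rightarrow> 'v \<Rightarrow> real" where
  "Lam D lam i j = (if (i,j) \<in> D then lam (i,j) else 0)"

definition IdM :: "'v \<Rightarrow> 'v \<Rightarrow> real" where
  "IdM i j = (if i = j then 1 else 0)"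

definition psiK :: "'v set \<Rightarrow> ('v \<times> 'v) set \<Rightarrow> ('v \<times> 'v \<Rightarrow> real) \<Rightarrow> real \<Rightarrow> 'v \<Rightarrow> 'v \<Rightarrow> real" where
  "psiK V D lam s i j =
     s * (\<Sum>m\<in>V. (IdM i m - Lam D lam i m) * (IdM j m - Lam D lam j m))"

definition J_lam :: "'v set \<Rightarrow> ('v \<times> 'v) set \<Rightarrow> ('v \<times> 'v \<Rightarrow> real) \<Rightarrow> real
    \<Rightarrow> 'v \<times> 'v \<Rightarrow> 'v \<Rightarrow> 'v \<Rightarrow> real" where
  "J_lam V D lam s kl i j = deriv (\<lambda>t. psiK V D (lam(kl := t)) s i j) (lam kl)"

definition J_s :: "'v set \<Rightarrow> ('v \<times> 'v) set \<Rightarrow> ('v \<times> 'v \<Rightarrow> real) \<Rightarrow> real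
    \<Rightarrow> 'v \<Rightarrow> 'v \<Rightarrow> real" where
  "J_s V D lam s i j = deriv (\<lambda>t. psiK V D lam t i j) s"

text \<open>The row R_s after the operations R_s := R_s - lambda_kl/(2s) R_lambda_kl for
all (k,l) in D (the rows R_lambda_kl are untouched, so doing them one after the
other amounts to subtracting the sum), followed by R_s := 2 R_s.\<close>
definition Rs_new :: "'v set \<Rightarrow> ('v \<times> 'v) set \<Rightarrow> ('v \<times> 'v \<Rightarrow> real) \<Rightarrow> real
    \<Rightarrow> 'v \<Rightarrow> 'v \<Rightarrow> real" where
  "Rs_new V D lam s i j =
     2 * (J_s V D lam s i j - (\<Sum>kl\<in>D. lam kl / (2 * s) * J_lam V D lam s kl i j))"

end

theory Submission
  imports Defs
begin

definition aa :: "('v \<times> 'v) set \<Rightarrow> ('v \<times> 'v \<Rightarrow> real) \<Rightarrow> 'v \<Rightarrow> 'v \<Rightarrow> real" where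
  "aa D lam i m = IdM i m - Lam D lam i m"

definition ind :: "'v \<times> 'v \<Rightarrow> 'v \<Rightarrow> 'v \<Rightarrow> real" where
  "ind kl i m = (if (i,m) = kl then 1 else 0)"

lemma Lam_upd: "kl \<in> D \<Longrightarrow> Lam D (lam(kl := t)) i m = Lam D lam i m + ind kl i m * (t - lam kl)"
  by (auto simp: Lam_def ind_def)

lemma J_lam_eq:
  assumes "kl \<in> D"
  shows "J_lam V D lam s kl i j = s * (\<Sum>m\<in>V. - (ind kl i m * aa D lam j m) - aa D lam i m * ind kl j m)"
proof -
  have e: "(\<lambda>t. psiK V D (lam(kl := t)) s i j) = (\<lambda>t. s * (\<Sum>m\<in>V. (aa D lam i m - ind kl i m * (t - lam kl)) * (aa D lam j m - ind kl j m * (t - lam kl))))"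
    by (rule ext) (simp add: psiK_def Lam_upd[OF assms] aa_def algebra_simps)
  have "((\<lambda>t. s * (\<Sum>m\<in>V. (aa D lam i m - ind kl i m * (t - lam kl)) * (aa D lam j m - ind kl j m * (t - lam kl))))
     has_real_derivative s * (\<Sum>m\<in>V. - (ind kl i m * aa D lam j m) - aa D lam i m * ind kl j m)) (at (lam kl))"
    by (auto intro!: derivative_eq_intros sum.cong)
  then show ?thesis unfolding J_lam_def e by (rule DERIV_imp_deriv)
qed

lemma J_s_eq: "J_s V D lam s i j = (\<Sum>m\<in>V. aa D lam i m * aa D lam j m)"
proof -
  have "((\<lambda>t. psiK V D lam t i j) has_real_derivative (\<Sum>m\<in>V. aa D lam i m * aa D lam j m)) (at s)"
    unfolding psiK_def aa_def by (auto intro!: derivative_eq_intros)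
  then show ?thesis unfolding J_s_def by (rule DERIV_imp_deriv)
qed

lemma sum_ind: "finite D \<Longrightarrow> (\<Sum>kl\<in>D. lam kl * ind kl i m) = Lam D lam i m"
proof -
  assume f: "finite D"
  have "(\<Sum>kl\<in>D. lam kl * ind kl i m) = (\<Sum>kl\<in>D. if kl = (i,m) then lam (i,m) else 0)"
    by (rule sum.cong) (auto simp: ind_def)
  also have "\<dots> = Lam D lam i m" using f by (simp add: sum.delta' Lam_def)
  finally show ?thesis .
qed

lemma sum_IdM: "finite V \<Longrightarrow> i \<in> V \<Longrightarrow> (\<Sum>m\<in>V. IdM i m * f m) = (f i :: real)"
proof -
  assume "finite V" "i \<in> V"
  have "(\<Sum>m\<in>V. IdM i m * f m) = (\<Sum>m\<in>V. if i = m then f i else 0)"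
    by (rule sum.cong) (auto simp: IdM_def)
  then show ?thesis using \<open>finite V\<close> \<open>i \<in> V\<close> by simp
qed

lemma Rs_formula:
  assumes "digraph V D" "s \<noteq> 0" "i \<in> V" "j \<in> V"
  shows "Rs_new V D lam s i j = 2 * IdM i j - Lam D lam i j - Lam D lam j i"
proof -
  have fV: "finite V" and fD: "finite D" using assms(1) unfolding digraph_def
    by (auto intro: finite_subset[of D "V \<times> V"])
  have "(\<Sum>kl\<in>D. lam kl / (2 * s) * J_lam V D lam s kl i j)
     = (\<Sum>kl\<in>D. (\<Sum>m\<in>V. lam kl * (- (ind kl i m * aa D lam j m) - aa D lam i m * ind kl j m)) / 2)"
    by (rule sum.cong) (auto simp: J_lam_eq sum_distrib_left sum_divide_distrib assms(2))
  also have "\<dots> = (\<Sum>m\<in>V. (\<Sum>kl\<in>D. lam kl * (- (ind kl i m * aa D lam j m) - aa D lam i m * ind kl j m))) / 2"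
    by (simp add: sum_divide_distrib[symmetric] sum.swap[of _ D V])
  also have "\<dots> = (\<Sum>m\<in>V. - (Lam D lam i m * aa D lam j m) - aa D lam i m * Lam D lam j m) / 2"
  proof -
    have "\<And>m. (\<Sum>kl\<in>D. lam kl * (- (ind kl i m * aa D lam j m) - aa D lam i m * ind kl j m))
       = - ((\<Sum>kl\<in>D. lam kl * ind kl i m) * aa D lam j m) - aa D lam i m * (\<Sum>kl\<in>D. lam kl * ind kl j m)"
      by (simp add: sum_distrib_left sum_distrib_right sum_subtractf sum_negf algebra_simps)
    then show ?thesis using fD by (simp add: sum_ind)
  qed
  finally have A: "(\<Sum>kl\<in>D. lam kl / (2 * s) * J_lam V D lam s kl i j) = \<dots>" .
  have "Rs_new V D lam s i j = (\<Sum>m\<in>V. IdM i m * aa D lam j m + aa D lam i m * IdM j m)"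
    unfolding Rs_new_def A J_s_eq
    apply (simp add: sum_divide_distrib sum_distrib_left sum_subtractf[symmetric] sum.distrib[symmetric] aa_def algebra_simps)
    apply (rule sum.cong, simp, simp add: field_simps)
    done
  also have "\<dots> = aa D lam j i + aa D lam i j"
    using fV assms(3,4) by (simp add: sum.distrib sum_IdM mult.commute[of "aa D lam i _"])
  finally show ?thesis by (simp add: aa_def IdM_def)
qed

theorem lemma3p3:
  fixes V :: "'v set" and D :: "('v \<times> 'v) set"
    and lam :: "'v \<times> 'v \<Rightarrow> real" and s :: real
  assumes "digraph V D"
    and "\<forall>(i,j)\<in>D. (j,i) \<notin> D"
    and "s \<noteq> 0"
  shows "(\<forall>i\<in>V. Rs_new V D lam s i i = 2)
       \<and> (\<forall>(i,j)\<in>D. Rs_new V D lam s i j = - lam (i,j))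
       \<and> (\<forall>i\<in>V. \<forall>j\<in>V. i \<noteq> j \<and> (i,j) \<notin> D \<and> (j,i) \<notin> D \<longrightarrow> Rs_new V D lam s i j = 0)"
proof -
  have DV: "D \<subseteq> V \<times> V" and irr: "\<forall>(i,j)\<in>D. i \<noteq> j" using assms(1) by (auto simp: digraph_def)
  show ?thesis
  proof (intro conjI ballI allI impI)
    fix i assume "i \<in> V"
    then show "Rs_new V D lam s i i = 2" using Rs_formula[OF assms(1,3)] irr
      by (auto simp: Lam_def IdM_def)
  next
    fix x assume x: "x \<in> D"
    obtain i j where xe: "x = (i,j)" by (cases x)
    have "i \<in> V" "j \<in> V" "i \<noteq> j" "(j,i) \<notin> D" using x xe DV irr assms(2) by auto
    then show "case x of (i, j) \<Rightarrow> Rs_new V D lam s i j = - lam (i, j)"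
      using Rs_formula[OF assms(1,3)] x xe by (auto simp: Lam_def IdM_def)
  next
    fix i j assume "i \<in> V" "j \<in> V" "i \<noteq> j \<and> (i, j) \<notin> D \<and> (j, i) \<notin> D"
    then show "Rs_new V D lam s i j = 0" using Rs_formula[OF assms(1,3)]
      by (auto simp: Lam_def IdM_def)
  qed
qed

end
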